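(* Let $\Omega\subset\mathbb{R}^N$ be a bounded open set. Let $u:\mathbb{R}^N\to\mathbb{R}$ be a bounded measurable function with $\int_{(0,1)}[u]_s^2\,d\mu(s)<\infty$, such that $\int_{(0,1)}\mathscr N_su(x)\,d\mu(s)=0$ for every $x\in\mathbb{R}^N\setminus\overline\Omega$. Then $$\lim_{|x|\to+\infty}u(x)=\frac1{|\Omega|}\int_\Omega u(x)\,dx.$$
   Context: $\mu$ is a nonnegative, nontrivial finite Borel measure on $(0,1)$. For $s\in(0,1)$, $c_{N,s}:=-\frac{2^{2s-1}\Gamma(\frac{N+2s}{2})}{\pi^{N/2}\Gamma(-s)}>0$. For $x\in\mathbb{R}^N\setminus\overline\Omega$, $\mathscr N_su(x):=c_{N,s}\int_\Omega\frac{u(x)-u(y)}{|x-y|^{N+2s}}dy$. $\mathcal Q:=\mathbb{R}^{2N}\setminus(\mathbb{R}^N\setminus\Omega)^2$ and $[u]_s^2:=c_{N,s}\iint_{\mathcal Q}\frac{|u(x)-u(y)|^2}{|x-y|^{N+2s}}dxdy$. *)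

theory Defs
  imports "HOL-Analysis.Analysis"
begin

definition cNs :: "nat \<Rightarrow> real \<Rightarrow> real" where
  "cNs n s = - (2 powr (2 * s - 1) * Gamma ((real n + 2 * s) / 2))
              / (pi powr (real n / 2) * Gamma (- s))"

definition neumann_s :: "'a::euclidean_space set \<Rightarrow> ('a \<Rightarrow> real) \<Rightarrow> real \<Rightarrow> 'a \<Rightarrow> real" where
  "neumann_s \<Omega> u s x = cNs DIM('a) s *
     (\<integral>y\<in>\<Omega>. (u x - u y) / norm (x - y) powr (real DIM('a) + 2 * s) \<partial>lebesgue)"

definition QQ :: "'a::euclidean_space set \<Rightarrow> ('a \<times> 'a) set" where
  "QQ \<Omega> = UNIV - (UNIV - \<Omega>) \<times> (UNIV - \<Omega>)"

definition gagliardo_sq :: "'a::euclidean_space set \<Rightarrow> ('a \<Rightarrow> real) \<Rightarrow> real \<Rightarrow> ennreal" where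
  "gagliardo_sq \<Omega> u s = (\<integral>\<^sup>+ p. indicator (QQ \<Omega>) p *
      ennreal (cNs DIM('a) s * \<bar>u (fst p) - u (snd p)\<bar>\<^sup>2
               / norm (fst p - snd p) powr (real DIM('a) + 2 * s)) \<partial>(lebesgue \<Otimes>\<^sub>M lebesgue))"

end

theory Submission
  imports Defs "HOL-Real_Asymp.Real_Asymp"
begin


lemma cNs_alt: "cNs n s = - (2 powr (2 * s - 1) * Gamma ((real n + 2 * s) / 2) * rGamma (- s)) / (pi powr (real n / 2))"
proof -
  have "\<And>X P G::real. - X / (P * G) = - (X * inverse G) / P"
    by (simp add: divide_inverse mult.assoc mult.commute)
  then show ?thesis unfolding cNs_def rGamma_inverse_Gamma by simp
qed

lemma cNs_pos: assumes "0 < s" "s < 1" shows "cNs n s > 0"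
proof -
  have ni: "- s \<notin> \<int>\<^sub>\<le>\<^sub>0"
  proof
    assume "- s \<in> \<int>\<^sub>\<le>\<^sub>0"
    then obtain k :: int where "- s = of_int k" "k \<le> 0" by (auto elim!: nonpos_Ints_cases)
    moreover have "k = 0 \<or> k \<le> -1" using \<open>k \<le> 0\<close> by arith
    then have "real_of_int k = 0 \<or> real_of_int k \<le> -1" by auto
    ultimately show False using assms by linarith
  qed
  have "Gamma (- s + 1) = (- s) * Gamma (- s)" using Gamma_plus1[OF ni] .
  then have e: "Gamma (- s) = Gamma (- s + 1) / (- s)" using assms by (simp add: field_simps)
  have "Gamma (- s + 1) > 0" using assms by (intro Gamma_real_pos) linarith
  then have g: "Gamma (- s) < 0" unfolding e using assms by (simp add: divide_pos_neg)
  have a: "Gamma ((real n + 2 * s) / 2) > 0" using assms by (intro Gamma_real_pos) simp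
  have b: "pi powr (real n / 2) * Gamma (- s) < 0" using g by (simp add: mult_pos_neg)
  have "2 powr (2 * s - 1) * Gamma ((real n + 2 * s) / 2) / (pi powr (real n / 2) * Gamma (- s)) < 0"
    using a b by (intro divide_pos_neg mult_pos_pos) auto
  then show ?thesis unfolding cNs_def by (simp only: minus_divide_left[symmetric])
qed

lemma cNs_cont: assumes "n \<ge> 1" shows "continuous_on {0..1} (cNs n)"
proof -
  have "continuous_on {0..1} (\<lambda>s. - (2 powr (2 * s - 1) * Gamma ((real n + 2 * s) / 2) * rGamma (- s)) / (pi powr (real n / 2)))"
  proof (intro continuous_at_imp_continuous_on ballI)
    fix s :: real assume s: "s \<in> {0..1}"
    show "isCont (\<lambda>s. - (2 powr (2 * s - 1) * Gamma ((real n + 2 * s) / 2) * rGamma (- s)) / (pi powr (real n / 2))) s"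
    proof -
      have "(real n + 2 * s) / 2 > 0" using s \<open>n \<ge> 1\<close> by auto
      then have "(real n + 2 * s) / 2 \<notin> \<int>\<^sub>\<le>\<^sub>0" by (auto elim!: nonpos_Ints_cases)
      then show ?thesis by (intro continuous_intros) auto
    qed
  qed
  then show ?thesis by (simp add: cNs_alt[abs_def])
qed


lemma sf_leb: "sigma_finite_measure (lebesgue :: 'a::euclidean_space measure)"
proof
  obtain A :: "'a set set" where A: "countable A" "A \<subseteq> sets lborel" "\<Union>A = space lborel" "\<forall>a\<in>A. emeasure lborel a \<noteq> \<infinity>"
    using lborel.sigma_finite_countable by blast
  show "\<exists>A::'a set set. countable A \<and> A \<subseteq> sets lebesgue \<and> \<Union> A = space lebesgue \<and> (\<forall>a\<in>A. emeasure lebesgue a \<noteq> \<infinity>)"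
    using A by (intro exI[of _ A]) auto
qed
lemma id_leb[measurable]: "(\<lambda>x::'a::euclidean_space. x) \<in> borel_measurable lebesgue"
  using id_borel_measurable_lebesgue by (simp add: id_def)


lemma ratio_bound:
  fixes R \<eta> :: real and n :: nat
  assumes "R \<ge> 0" "\<eta> > 0"
  shows "\<exists>B>2*R. \<forall>r \<rho> p. r \<ge> B \<longrightarrow> r - R \<le> \<rho> \<longrightarrow> \<rho> \<le> r + R \<longrightarrow> real n \<le> p \<longrightarrow> p \<le> real n + 2
     \<longrightarrow> \<bar>1 / \<rho> powr p - 1 / r powr p\<bar> \<le> \<eta> / r powr p"
proof -
  define q where "q = real n + 2"
  have l1: "((\<lambda>r. (r / (r - R)) powr q) \<longlongrightarrow> 1) at_top" unfolding q_def by real_asymp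
  have l2: "((\<lambda>r. (r / (r + R)) powr q) \<longlongrightarrow> 1) at_top" unfolding q_def by real_asymp
  have "eventually (\<lambda>r. (r / (r - R)) powr q < 1 + \<eta>) at_top"
    using order_tendstoD(2)[OF l1] assms by simp
  moreover have "eventually (\<lambda>r. (r / (r + R)) powr q > 1 - \<eta>) at_top"
    using order_tendstoD(1)[OF l2] assms by simp
  moreover have "eventually (\<lambda>r. r > 2 * R + 1) at_top" by real_asymp
  ultimately have "eventually (\<lambda>r. (r / (r - R)) powr q < 1 + \<eta> \<and> (r / (r + R)) powr q > 1 - \<eta> \<and> r > 2 * R + 1) at_top"
    by eventually_elim auto
  then obtain B0 where B0: "\<And>r. r \<ge> B0 \<Longrightarrow> (r / (r - R)) powr q < 1 + \<eta> \<and> (r / (r + R)) powr q > 1 - \<eta> \<and> r > 2 * R + 1"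
    unfolding eventually_at_top_linorder by blast
  define B where "B = max B0 (2 * R + 1)"
  have "B > 2 * R" unfolding B_def by auto
  moreover have "\<forall>r \<rho> p. r \<ge> B \<longrightarrow> r - R \<le> \<rho> \<longrightarrow> \<rho> \<le> r + R \<longrightarrow> real n \<le> p \<longrightarrow> p \<le> real n + 2
     \<longrightarrow> \<bar>1 / \<rho> powr p - 1 / r powr p\<bar> \<le> \<eta> / r powr p"
  proof (intro allI impI)
    fix r \<rho> p :: real
    assume r: "r \<ge> B" and \<rho>1: "r - R \<le> \<rho>" and \<rho>2: "\<rho> \<le> r + R" and p1: "real n \<le> p" and p2: "p \<le> real n + 2"
    have B: "(r / (r - R)) powr q < 1 + \<eta>" "(r / (r + R)) powr q > 1 - \<eta>" "r > 2 * R + 1"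
      using B0[of r] r unfolding B_def by auto
    have rpos: "r > 0" "\<rho> > 0" "r - R > 0" using B \<rho>1 assms by auto
    have pq: "0 \<le> p" "p \<le> q" using p1 p2 unfolding q_def by auto
    define t where "t = r / \<rho>"
    have tpos: "t > 0" unfolding t_def using rpos by auto
    have eq: "1 / \<rho> powr p - 1 / r powr p = (t powr p - 1) / r powr p"
      unfolding t_def using rpos by (simp add: powr_divide field_simps)
    have "\<bar>t powr p - 1\<bar> \<le> \<eta>"
    proof (cases "\<rho> \<ge> r")
      case True
      then have t1: "t \<le> 1" unfolding t_def using rpos by simp
      have "t \<ge> r / (r + R)" unfolding t_def using rpos \<rho>2 by (intro divide_left_mono) auto
      then have "(r / (r + R)) powr q \<le> t powr q" using rpos assms pq by (intro powr_mono2) auto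
      also have "\<dots> \<le> t powr p" using t1 tpos pq by (intro powr_mono') auto
      finally have a: "1 - \<eta> \<le> t powr p" using B by linarith
      have "t powr p \<le> t powr 0" using t1 tpos pq by (intro powr_mono') auto
      then have "t powr p \<le> 1" using tpos by simp
      then show ?thesis using a by linarith
    next
      case False
      then have t1: "t \<ge> 1" unfolding t_def using rpos by simp
      have "t \<le> r / (r - R)" unfolding t_def using rpos \<rho>1 by (intro divide_left_mono) auto
      then have "t powr q \<le> (r / (r - R)) powr q" using tpos pq by (intro powr_mono2) auto
      moreover have "t powr p \<le> t powr q" using t1 pq by (intro powr_mono) auto
      ultimately have a: "t powr p \<le> 1 + \<eta>" using B by linarith
      have "1 \<le> t powr p" using t1 pq by (simp add: ge_one_powr_ge_zero)
      then show ?thesis using a by linarith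
    qed
    then show "\<bar>1 / \<rho> powr p - 1 / r powr p\<bar> \<le> \<eta> / r powr p"
      unfolding eq using rpos by (simp add: abs_divide divide_right_mono)
  qed
  ultimately show ?thesis by blast
qed

lemma cNs_bound: assumes "n \<ge> 1" shows "\<exists>C. \<forall>s\<in>{0<..<1}. \<bar>cNs n s\<bar> \<le> C"
proof -
  have "compact (cNs n ` {0..1})" by (intro compact_continuous_image cNs_cont assms compact_Icc)
  then obtain C where "\<forall>y\<in>cNs n ` {0..1}. norm y \<le> C" using compact_imp_bounded bounded_iff by metis
  then show ?thesis by force
qed

lemma cNs_meas: assumes "n \<ge> 1" shows "(\<lambda>s. indicator {0<..<1} s * cNs n s) \<in> borel_measurable borel"
  using borel_measurable_continuous_on_indicator[of "{0<..<1}" "cNs n"]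
    continuous_on_subset[OF cNs_cont[OF assms], of "{0<..<1}"] by fastforce

lemma int_ind:
  fixes g :: "'a::euclidean_space \<Rightarrow> real"
  assumes [measurable]: "\<Omega> \<in> sets lebesgue" and fin: "emeasure lebesgue \<Omega> < \<infinity>"
    and [measurable]: "g \<in> borel_measurable lebesgue" and b: "\<And>y. y \<in> \<Omega> \<Longrightarrow> \<bar>g y\<bar> \<le> B"
  shows "integrable lebesgue (\<lambda>y. indicator \<Omega> y * g y)"
proof (rule Bochner_Integration.integrable_bound[where f="\<lambda>y. B * indicator \<Omega> y"])
  show "integrable lebesgue (\<lambda>y. B * indicator \<Omega> y)"
  proof -
    have "integrable lebesgue (indicator \<Omega> :: 'a \<Rightarrow> real)" using fin by simp
    then show ?thesis by simp
  qed
  show "(\<lambda>y. indicator \<Omega> y * g y) \<in> borel_measurable lebesgue" by measurable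
  show "AE y in lebesgue. norm (indicator \<Omega> y * g y) \<le> norm (B * indicator \<Omega> y)"
    using b by (intro AE_I2) (force split: split_indicator)
qed



theorem theorem1p3:
  fixes \<Omega> :: "'a::euclidean_space set"
    and u :: "'a \<Rightarrow> real"
    and \<mu> :: "real measure"
  assumes mu_borel: "sets \<mu> = sets borel"
    and mu_finite: "finite_measure \<mu>"
    and mu_supp: "emeasure \<mu> (- {0<..<1}) = 0"
    and mu_nontriv: "emeasure \<mu> {0<..<1} \<noteq> 0"
    and \<Omega>_open: "open \<Omega>" and \<Omega>_bdd: "bounded \<Omega>" and \<Omega>_ne: "\<Omega> \<noteq> {}"
    and u_meas: "u \<in> borel_measurable lebesgue"
    and u_bdd: "bounded (range u)"
    and energy: "(\<integral>\<^sup>+ s\<in>{0<..<1}. gagliardo_sq \<Omega> u s \<partial>\<mu>) < \<infinity>"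
    and neumann: "\<And>x. x \<notin> closure \<Omega> \<Longrightarrow>
                    (\<integral>s\<in>{0<..<1}. neumann_s \<Omega> u s x \<partial>\<mu>) = 0"
  shows "(u \<longlongrightarrow> (1 / measure lebesgue \<Omega>) * (\<integral>x\<in>\<Omega>. u x \<partial>lebesgue)) at_infinity"
proof -
  define n where "n = DIM('a)"
  have n1: "n \<ge> 1" unfolding n_def using DIM_positive[where 'a='a] by linarith
  have \<Omega>l: "\<Omega> \<in> lmeasurable" using lmeasurable_open \<Omega>_bdd \<Omega>_open by blast
  have \<Omega>s[measurable]: "\<Omega> \<in> sets lebesgue" using \<Omega>l by (simp add: fmeasurable_def)
  have \<Omega>fin: "emeasure lebesgue \<Omega> < \<infinity>" using \<Omega>l by (simp add: fmeasurable_def)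
  note u_meas[measurable]
  define V where "V = measure lebesgue \<Omega>"
  have Vpos: "V > 0"
  proof -
    obtain a where a: "a \<in> \<Omega>" using \<Omega>_ne by blast
    then obtain e where e: "e > 0" "ball a e \<subseteq> \<Omega>" using \<Omega>_open openE by blast
    have "0 < measure lborel (ball a e)" using content_ball_pos[OF e(1)] by simp
    also have "measure lborel (ball a e) = measure lebesgue (ball a e)" by simp
    also have "\<dots> \<le> V" unfolding V_def using e \<Omega>l by (intro measure_mono_fmeasurable) auto
    finally show ?thesis .
  qed
  define S where "S = (\<integral>y\<in>\<Omega>. u y \<partial>lebesgue)"
  obtain M where M: "\<And>y. \<bar>u y\<bar> \<le> M" using u_bdd unfolding bounded_iff by auto
  have M0: "M \<ge> 0" using M[of undefined] by linarith
  obtain R0 where R0: "\<And>y. y \<in> \<Omega> \<Longrightarrow> norm y \<le> R0" using \<Omega>_bdd unfolding bounded_iff by auto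
  define R where "R = max R0 1"
  have R: "R \<ge> 1" "\<And>y. y \<in> \<Omega> \<Longrightarrow> norm y \<le> R" unfolding R_def using R0 by force+
  obtain C where C: "\<And>s. s \<in> {0<..<1} \<Longrightarrow> \<bar>cNs n s\<bar> \<le> C" using cNs_bound[OF n1] by blast
  have C0: "C \<ge> 0" using C[of "1/2"] by simp
  have key: "\<bar>u x * V - S\<bar> \<le> 2 * M * V * \<eta>"
    if xr: "norm x > 2 * R" and \<eta>0: "\<eta> \<ge> 0"
      and H: "\<And>y (s::real). y \<in> \<Omega> \<Longrightarrow> 0 < s \<Longrightarrow> s < 1 \<Longrightarrow>
          \<bar>1 / norm (x - y) powr (real n + 2 * s) - 1 / norm x powr (real n + 2 * s)\<bar>
            \<le> \<eta> / norm x powr (real n + 2 * s)"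
    for x \<eta>
  proof -
    have xpos: "norm x > 0" using xr R by linarith
    have "closure \<Omega> \<subseteq> cball 0 R" using R(2) by (intro closure_minimal) auto
    then have xcl: "x \<notin> closure \<Omega>" using xr R by auto
    have d1: "norm (x - y) \<ge> 1" if "y \<in> \<Omega>" for y
      using norm_triangle_ineq2[of x y] R(2)[OF that] xr R(1) by linarith
    define I where "I s = (\<integral>y. indicator \<Omega> y * ((u x - u y) / norm (x - y) powr (real n + 2 * s)) \<partial>lebesgue)" for s
    have neu: "neumann_s \<Omega> u s x = cNs n s * I s" for s
      unfolding neumann_s_def I_def n_def set_lebesgue_integral_def by simp
    have Imeas[measurable]: "I \<in> borel_measurable borel"
    proof -
      interpret sigma_finite_measure "lebesgue :: 'a measure" by (rule sf_leb)
      show ?thesis unfolding I_def by (rule borel_measurable_lebesgue_integral) measurable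
    qed
    have pb: "\<bar>(u x - u y) / norm (x - y) powr (real n + 2 * s)\<bar> \<le> 2 * M"
      if y: "y \<in> \<Omega>" and s: "0 < s" for y s
    proof -
      have b1: "norm (x - y) powr (real n + 2 * s) \<ge> 1" using d1[OF y] s by (intro ge_one_powr_ge_zero) auto
      have a: "\<bar>u x - u y\<bar> \<le> 2 * M" using M[of x] M[of y] by linarith
      have "\<bar>(u x - u y) / norm (x - y) powr (real n + 2 * s)\<bar> = \<bar>u x - u y\<bar> / norm (x - y) powr (real n + 2 * s)"
        using b1 by (simp add: abs_divide)
      also have "\<dots> \<le> \<bar>u x - u y\<bar> / 1" using b1 by (intro divide_left_mono) auto
      finally show ?thesis using a by simp
    qed
    have intI: "integrable lebesgue (\<lambda>y. indicator \<Omega> y * ((u x - u y) / norm (x - y) powr (real n + 2 * s)))"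
      if s: "0 < s" for s
    proof (rule int_ind[OF \<Omega>s \<Omega>fin, where B="2 * M"])
      show "(\<lambda>y. (u x - u y) / norm (x - y) powr (real n + 2 * s)) \<in> borel_measurable lebesgue" by measurable
      fix y assume y: "y \<in> \<Omega>"
      show "\<bar>(u x - u y) / norm (x - y) powr (real n + 2 * s)\<bar> \<le> 2 * M" using pb[OF y s] .
    qed
    have intc: "integrable lebesgue (\<lambda>y. indicator \<Omega> y * c)" for c :: real
      by (rule int_ind[OF \<Omega>s \<Omega>fin, where B="\<bar>c\<bar>"]) auto
    have intc_eq: "(\<integral>y. indicator \<Omega> y * c \<partial>lebesgue) = V * c" for c :: real
      by (simp add: V_def)
    have Ibound: "\<bar>I s\<bar> \<le> 2 * M * V" if s: "0 < s" for s
    proof -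
      have "\<bar>I s\<bar> \<le> (\<integral>y. indicator \<Omega> y * (2 * M) \<partial>lebesgue)"
        unfolding I_def
      proof (rule integral_abs_bound_integral[OF intI[OF s] intc])
        fix y show "\<bar>indicator \<Omega> y * ((u x - u y) / norm (x - y) powr (real n + 2 * s))\<bar> \<le> indicator \<Omega> y * (2 * M)"
          using pb[of y s] s by (cases "y \<in> \<Omega>") auto
      qed
      then show ?thesis unfolding intc_eq by (simp add: mult_ac)
    qed
    have Iclose: "\<bar>I s - (u x * V - S) / norm x powr (real n + 2 * s)\<bar> \<le> 2 * M * V * \<eta> / norm x powr (real n + 2 * s)"
      if s: "0 < s" "s < 1" for s
    proof -
      define p where "p = real n + 2 * s"
      define w where "w = norm x powr p"
      have w: "w > 0" unfolding w_def using xpos by simp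
      have a: "\<bar>u x - u y\<bar> \<le> 2 * M" for y using M[of x] M[of y] by linarith
      have int2: "integrable lebesgue (\<lambda>y. indicator \<Omega> y * ((u x - u y) / w))"
      proof (rule int_ind[OF \<Omega>s \<Omega>fin, where B="2 * M / w"])
        show "(\<lambda>y. (u x - u y) / w) \<in> borel_measurable lebesgue" by measurable
        fix y show "\<bar>(u x - u y) / w\<bar> \<le> 2 * M / w"
          using a[of y] w by (simp add: abs_divide divide_right_mono)
      qed
      have intu: "integrable lebesgue (\<lambda>y. indicator \<Omega> y * u y)"
        by (rule int_ind[OF \<Omega>s \<Omega>fin, where B=M]) (use M in auto)
      have Sdef: "S = (\<integral>y. indicator \<Omega> y * u y \<partial>lebesgue)"
        unfolding S_def set_lebesgue_integral_def by simp
      have eqS: "(\<integral>y. indicator \<Omega> y * ((u x - u y) / w) \<partial>lebesgue) = (u x * V - S) / w"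
      proof -
        have "(\<integral>y. indicator \<Omega> y * ((u x - u y) / w) \<partial>lebesgue)
            = (\<integral>y. (indicator \<Omega> y * u x - indicator \<Omega> y * u y) / w \<partial>lebesgue)"
          by (intro Bochner_Integration.integral_cong) (auto simp: field_simps)
        also have "\<dots> = (\<integral>y. indicator \<Omega> y * u x - indicator \<Omega> y * u y \<partial>lebesgue) / w"
          by simp
        also have "(\<integral>y. indicator \<Omega> y * u x - indicator \<Omega> y * u y \<partial>lebesgue)
            = (\<integral>y. indicator \<Omega> y * u x \<partial>lebesgue) - (\<integral>y. indicator \<Omega> y * u y \<partial>lebesgue)"
          by (rule Bochner_Integration.integral_diff[OF intc intu])
        also have "\<dots> = u x * V - S" unfolding intc_eq Sdef by simp
        finally show ?thesis .
      qed
      have "I s - (u x * V - S) / w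
          = (\<integral>y. indicator \<Omega> y * ((u x - u y) / norm (x - y) powr p) - indicator \<Omega> y * ((u x - u y) / w) \<partial>lebesgue)"
        unfolding I_def eqS[symmetric] p_def
        by (rule Bochner_Integration.integral_diff[symmetric, OF intI[OF s(1)] int2[unfolded p_def]])
      also have "\<bar>\<dots>\<bar> \<le> (\<integral>y. indicator \<Omega> y * (2 * M * \<eta> / w) \<partial>lebesgue)"
      proof (rule integral_abs_bound_integral)
        show "integrable lebesgue (\<lambda>y. indicator \<Omega> y * ((u x - u y) / norm (x - y) powr p) - indicator \<Omega> y * ((u x - u y) / w))"
          unfolding p_def using intI[OF s(1)] int2[unfolded p_def] by (rule Bochner_Integration.integrable_diff)
        show "integrable lebesgue (\<lambda>y. indicator \<Omega> y * (2 * M * \<eta> / w))" by (rule intc)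
        fix y
        show "\<bar>indicator \<Omega> y * ((u x - u y) / norm (x - y) powr p) - indicator \<Omega> y * ((u x - u y) / w)\<bar>
            \<le> indicator \<Omega> y * (2 * M * \<eta> / w)"
        proof (cases "y \<in> \<Omega>")
          case True
          have e: "(u x - u y) / norm (x - y) powr p - (u x - u y) / w = (u x - u y) * (1 / norm (x - y) powr p - 1 / w)"
            by (simp add: divide_inverse right_diff_distrib)
          have "\<bar>(u x - u y) * (1 / norm (x - y) powr p - 1 / w)\<bar> \<le> (2 * M) * (\<eta> / w)"
            unfolding abs_mult using a[of y] H[OF True s] unfolding p_def w_def
            by (intro mult_mono) auto
          then show ?thesis using True e by simp
        qed simp
      qed
      also have "\<dots> = 2 * M * V * \<eta> / w" unfolding intc_eq by simp
      finally show ?thesis unfolding w_def p_def .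
    qed
    define F where "F s = indicator {0<..<1} s * neumann_s \<Omega> u s x" for s
    interpret finite_measure \<mu> by (rule mu_finite)
    have Fmeas: "F \<in> borel_measurable \<mu>"
    proof -
      have "F = (\<lambda>s. (indicator {0<..<1} s * cNs n s) * I s)" unfolding F_def neu by (simp add: mult.assoc)
      moreover have "(\<lambda>s. (indicator {0<..<1} s * cNs n s) * I s) \<in> borel_measurable borel"
        using cNs_meas[OF n1] by measurable
      ultimately show ?thesis by (simp add: measurable_cong_sets[OF mu_borel refl])
    qed
    have Fint: "integrable \<mu> F"
    proof (rule integrable_const_bound[where B="C * (2 * M * V)"])
      show "F \<in> borel_measurable \<mu>" by (rule Fmeas)
      show "AE s in \<mu>. norm (F s) \<le> C * (2 * M * V)"
      proof (intro AE_I2)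
        fix s
        show "norm (F s) \<le> C * (2 * M * V)"
        proof (cases "s \<in> {0<..<1}")
          case True
          then have "\<bar>cNs n s * I s\<bar> \<le> C * (2 * M * V)" unfolding abs_mult
            using C[OF True] Ibound[of s] by (intro mult_mono) auto
          then show ?thesis using True unfolding F_def neu by simp
        next
          case False
          then show ?thesis unfolding F_def using C0 M0 Vpos by simp
        qed
      qed
    qed
    have zero: "integral\<^sup>L \<mu> F = 0"
      using neumann[OF xcl] unfolding F_def set_lebesgue_integral_def by simp
    have Asets: "{0<..<1} \<in> sets \<mu>" using mu_borel by simp
    show ?thesis
    proof (rule ccontr)
      assume "\<not> ?thesis"
      then have "u x * V - S > 2 * M * V * \<eta> \<or> u x * V - S < - (2 * M * V * \<eta>)" by linarith
      then show False
      proof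
        assume pos: "u x * V - S > 2 * M * V * \<eta>"
        have Fpos: "F s > 0" if s: "s \<in> {0<..<1}" for s
        proof -
          let ?w = "norm x powr (real n + 2 * s)"
          have w: "?w > 0" using xpos by simp
          have "(u x * V - S) / ?w - 2 * M * V * \<eta> / ?w > 0" using pos w
            by (simp add: diff_divide_distrib[symmetric])
          then have "I s > 0" using Iclose[of s] s by auto
          then show ?thesis unfolding F_def neu using s cNs_pos[of s n] by simp
        qed
        have Fnn: "F s \<ge> 0" for s
          using Fpos[of s] unfolding F_def by (cases "s \<in> {0<..<1}") auto
        have ae1: "AE s in \<mu>. s \<in> {0<..<1} \<longrightarrow> 0 \<noteq> F s" using Fpos by (intro AE_I2) fastforce
        have ae2: "AE s in \<mu>. 0 \<le> F s" using Fnn by (intro AE_I2) auto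
        have "integral\<^sup>L \<mu> (\<lambda>_. 0) < integral\<^sup>L \<mu> F"
          by (rule integral_less_AE[OF integrable_zero Fint mu_nontriv Asets ae1 ae2])
        then show False using zero by simp
      next
        assume neg: "u x * V - S < - (2 * M * V * \<eta>)"
        have Fneg: "F s < 0" if s: "s \<in> {0<..<1}" for s
        proof -
          let ?w = "norm x powr (real n + 2 * s)"
          have w: "?w > 0" using xpos by simp
          have "(u x * V - S) / ?w + 2 * M * V * \<eta> / ?w < 0" using neg w
            by (simp add: add_divide_distrib[symmetric] divide_neg_pos)
          then have "I s < 0" using Iclose[of s] s by auto
          then show ?thesis unfolding F_def neu using s cNs_pos[of s n] by (simp add: mult_pos_neg)
        qed
        have Fnp: "F s \<le> 0" for s
          using Fneg[of s] unfolding F_def by (cases "s \<in> {0<..<1}") auto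
        have ae1: "AE s in \<mu>. s \<in> {0<..<1} \<longrightarrow> F s \<noteq> 0" using Fneg by (intro AE_I2) fastforce
        have ae2: "AE s in \<mu>. F s \<le> 0" using Fnp by (intro AE_I2) auto
        have "integral\<^sup>L \<mu> F < integral\<^sup>L \<mu> (\<lambda>_. 0)"
          by (rule integral_less_AE[OF Fint integrable_zero mu_nontriv Asets ae1 ae2])
        then show False using zero by simp
      qed
    qed
  qed
  show ?thesis
  proof (rule tendstoI)
    fix e :: real assume e: "e > 0"
    define \<eta> where "\<eta> = e / (2 * M + 1)"
    have \<eta>pos: "\<eta> > 0" unfolding \<eta>_def using e M0 by simp
    obtain B where B: "B > 2 * R" and
      HB: "\<And>r \<rho> p. r \<ge> B \<Longrightarrow> r - R \<le> \<rho> \<Longrightarrow> \<rho> \<le> r + R \<Longrightarrow> real n \<le> p \<Longrightarrow> p \<le> real n + 2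
       \<Longrightarrow> \<bar>1 / \<rho> powr p - 1 / r powr p\<bar> \<le> \<eta> / r powr p"
      using ratio_bound[of R \<eta> n] R(1) \<eta>pos by auto
    show "eventually (\<lambda>x. dist (u x) (1 / measure lebesgue \<Omega> * (\<integral>x\<in>\<Omega>. u x \<partial>lebesgue)) < e) at_infinity"
      unfolding eventually_at_infinity
    proof (intro exI allI impI)
      fix x :: 'a assume x: "B \<le> norm x"
      have "\<bar>u x * V - S\<bar> \<le> 2 * M * V * \<eta>"
      proof (rule key)
        show "norm x > 2 * R" using x B by linarith
        show "\<eta> \<ge> 0" using \<eta>pos by simp
        fix y and s :: real assume y: "y \<in> \<Omega>" and s: "0 < s" "s < 1"
        have "norm x \<le> norm (x - y) + norm y" using norm_triangle_ineq[of "x - y" y] by simp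
        moreover have "norm (x - y) \<le> norm x + norm y" using norm_triangle_ineq4[of x y] by simp
        ultimately show "\<bar>1 / norm (x - y) powr (real n + 2 * s) - 1 / norm x powr (real n + 2 * s)\<bar>
            \<le> \<eta> / norm x powr (real n + 2 * s)"
          using R(2)[OF y] s by (intro HB x) auto
      qed
      then have "\<bar>u x * V - S\<bar> / V \<le> 2 * M * \<eta>" using Vpos by (simp add: divide_le_eq mult_ac)
      moreover have "\<bar>u x * V - S\<bar> / V = dist (u x) (1 / V * S)"
        using Vpos by (simp add: dist_real_def abs_divide[symmetric] field_simps)
      moreover have "2 * M * \<eta> < e" unfolding \<eta>_def using e M0 by (simp add: field_simps)
      ultimately show "dist (u x) (1 / measure lebesgue \<Omega> * (\<integral>x\<in>\<Omega>. u x \<partial>lebesgue)) < e"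
        unfolding V_def S_def by linarith
    qed
  qed
qed
end
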